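(* Let $P_n(x)=\sum_{k=0}^{n}\frac{(q^{-n},q^{n+2};q)_k\,(q(1+(q-1)x);q)_k\,q^k}{(q,q,q^2;q)_k}$ for $n\ge 0$ (the $q$-Hahn type family ${}_3\phi_2\!\left(q^{-n},q^{c+d+n+1},q(1+(q-1)x);q^{c+1},q^{d+1};q,q\right)$ with $c=0,d=1$). Then the sequence $(\beta_{n+1}/\beta_1)_{n\ge0}$ is the sequence of moments of the orthogonal polynomials $(P_n)_{n\ge0}$.
   Context: $q$ is an indeterminate; we work over $\mathbb{Q}(q)$. The $q$-Bernoulli–Carlitz numbers $\beta_n\in\mathbb{Q}(q)$ are defined by: for all $n\ge0$, $q\sum_{k=0}^{n}\binom{n}{k}q^k\beta_k-\beta_n$ equals $q-1$ if $n=0$, $1$ if $n=1$, and $0$ if $n>1$ (so $\beta_0=1$, $\beta_1=-1/(q+1)$). The $q$-Pochhammer symbol is $(a;q)_k=(1-a)(1-qa)\cdots(1-q^{k-1}a)$ and $(a_1,\dots,a_r;q)_k=\prod_i(a_i;q)_k$. A sequence $(m_n)_{n\ge0}$ with $m_0=1$ is called the sequence of moments of a family of polynomials $(P_n)_{n\ge0}$ ($\deg P_n=n$) if the linear functional $L$ on $\mathbb{Q}(q)[x]$ with $L(x^n)=m_n$ satisfies $L(P_mP_n)=0$ for $m\ne n$ and $L(P_n^2)\neq0$. *)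

theory Defs
  imports "HOL-Computational_Algebra.Polynomial" "HOL-Computational_Algebra.Fraction_Field"
begin

type_synonym Qq = "rat poly fract"

definition qq :: Qq where
  "qq = Fract [:0, 1:] 1"

text \<open>q-Bernoulli-Carlitz numbers: the unique sequence satisfying the defining relation.\<close>
definition beta_rhs :: "nat \<Rightarrow> Qq" where
  "beta_rhs n = (if n = 0 then qq - 1 else if n = 1 then 1 else 0)"

definition beta :: "nat \<Rightarrow> Qq" where
  "beta = (THE b. \<forall>n. qq * (\<Sum>k\<le>n. of_nat (n choose k) * qq ^ k * b k) - b n = beta_rhs n)"

definition qpoch :: "Qq \<Rightarrow> nat \<Rightarrow> Qq" where
  "qpoch a k = (\<Prod>i<k. 1 - qq ^ i * a)"

definition qpoch_x :: "nat \<Rightarrow> Qq poly" where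
  "qpoch_x k = (\<Prod>i<k. 1 - smult (qq ^ i * qq) [:1, qq - 1:])"

definition Pfam :: "nat \<Rightarrow> Qq poly" where
  "Pfam n = (\<Sum>k\<le>n. smult
      (qpoch (inverse qq ^ n) k * qpoch (qq ^ (n + 2)) k * qq ^ k
        / (qpoch qq k * qpoch qq k * qpoch (qq ^ 2) k))
      (qpoch_x k))"

definition moment_functional :: "(nat \<Rightarrow> 'a::field) \<Rightarrow> 'a poly \<Rightarrow> 'a" where
  "moment_functional m p = (\<Sum>i\<le>degree p. coeff p i * m i)"

definition is_moment_sequence :: "(nat \<Rightarrow> 'a::field) \<Rightarrow> (nat \<Rightarrow> 'a poly) \<Rightarrow> bool" where
  "is_moment_sequence m P \<longleftrightarrow>
     m 0 = 1 \<and> (\<forall>n. degree (P n) = n) \<and>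
     (\<forall>i j. i \<noteq> j \<longrightarrow> moment_functional m (P i * P j) = 0) \<and>
     (\<forall>n. moment_functional m (P n * P n) \<noteq> 0)"

end

theory Submission
  imports Defs
begin


lemma qq_pow: "qq ^ n = Fract (monom 1 n) 1"
  unfolding qq_def by (induction n) (auto simp: One_fract_def monom_Suc  mult.commute)

lemma qq_pow_inj: "qq ^ a = qq ^ b \<longleftrightarrow> a = b"
  by (auto simp: qq_pow eq_fract monom_eq_iff')

lemma qq_nz[simp]: "qq \<noteq> 0"
  by (simp add: qq_def Zero_fract_def eq_fract)
lemma qq_nz_old: "qq \<noteq> 0"
  using qq_pow_inj[of 1 0] by auto

lemma qq_pow_ne1: "m \<noteq> 0 \<Longrightarrow> qq ^ m \<noteq> 1"
  using qq_pow_inj[of m 0] by auto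

lemma one_minus_qq_pow_nz: "m \<noteq> 0 \<Longrightarrow> 1 - qq ^ m \<noteq> 0"
  using qq_pow_ne1 by auto

lemma one_minus_qq_nz[simp]: "1 - qq \<noteq> 0" "qq - 1 \<noteq> 0" "qq \<noteq> 1"
  using qq_pow_ne1[of 1] by auto

lemma qq_ratio_nz: "a \<noteq> b \<Longrightarrow> 1 - qq ^ a / qq ^ b \<noteq> 0"
  using qq_pow_inj[of a b] by (auto simp: field_simps)


lemma qq_pow_nz[simp]: "qq ^ n \<noteq> 0" by simp

function bseq :: "nat \<Rightarrow> Qq" where
  "bseq n = (beta_rhs n - qq * (\<Sum>k<n. of_nat (n choose k) * qq ^ k * bseq k)) / (qq * qq ^ n - 1)"
  by auto
termination by (relation "measure id") auto

declare bseq.simps[simp del]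

lemma rel_iff: "qq * (\<Sum>k\<le>n. of_nat (n choose k) * qq ^ k * b k) - b n = beta_rhs n \<longleftrightarrow>
   b n = (beta_rhs n - qq * (\<Sum>k<n. of_nat (n choose k) * qq ^ k * b k)) / (qq * qq ^ n - 1)"
proof -
  have nz: "qq * qq ^ n - 1 \<noteq> 0" using qq_pow_ne1[of "Suc n"] by auto
  have "(\<Sum>k\<le>n. of_nat (n choose k) * qq ^ k * b k) = (\<Sum>k<n. of_nat (n choose k) * qq ^ k * b k) + qq^n * b n"
    by (simp add: lessThan_Suc_atMost[symmetric])
  thus ?thesis using nz by (auto simp: field_simps)
qed

lemma bseq_rel: "qq * (\<Sum>k\<le>n. of_nat (n choose k) * qq ^ k * bseq k) - bseq n = beta_rhs n"
  by (subst rel_iff) (rule bseq.simps)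

lemma rel_unique:
  assumes "\<forall>n. qq * (\<Sum>k\<le>n. of_nat (n choose k) * qq ^ k * b k) - b n = beta_rhs n"
  shows "b n = bseq n"
proof (induction n rule: less_induct)
  case (less n)
  have "b n = (beta_rhs n - qq * (\<Sum>k<n. of_nat (n choose k) * qq ^ k * b k)) / (qq * qq ^ n - 1)"
    using assms rel_iff by blast
  also have "\<dots> = (beta_rhs n - qq * (\<Sum>k<n. of_nat (n choose k) * qq ^ k * bseq k)) / (qq * qq ^ n - 1)"
    using less by (intro arg_cong2[where f="(/)"] arg_cong2[where f="(-)"] refl arg_cong2[where f="(*)"] sum.cong) auto
  also have "\<dots> = bseq n" by (rule bseq.simps[symmetric])
  finally show ?case .
qed

lemma beta_eq: "beta = bseq"
  unfolding beta_def
  by (rule the_equality) (use bseq_rel rel_unique in auto)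

lemma beta_rel: "qq * (\<Sum>k\<le>n. of_nat (n choose k) * qq ^ k * beta k) - beta n = beta_rhs n"
  by (simp add: beta_eq bseq_rel)

lemma beta0: "beta 0 = 1"
proof -
  have "(qq - 1) * beta 0 = (qq - 1) * 1" using beta_rel[of 0] by (simp add: beta_rhs_def algebra_simps)
  thus ?thesis using one_minus_qq_nz(2) by (metis mult_cancel_left)
qed

lemma beta1: "beta 1 = - 1 / (qq + 1)" "qq + 1 \<noteq> 0"
proof -
  have h: "qq * qq - 1 \<noteq> 0" using qq_pow_ne1[of 2] by (auto simp: power2_eq_square)
  have "qq + 1 \<noteq> 0" using h by (metis add.commute add.right_inverse minus_mult_minus mult_1 diff_minus_eq_add eq_iff_diff_eq_0 mult_minus_left) 
  then show "qq + 1 \<noteq> 0" .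
  have "qq * (1 + qq * beta 1) - beta 1 = 1" using beta_rel[of 1] beta0 by (simp add: beta_rhs_def)
  hence "beta 1 * (qq*qq - 1) = 1 - qq" by (simp add: algebra_simps)
  hence "beta 1 = (1 - qq) / (qq*qq - 1)" using h by (simp add: field_simps)
  also have "\<dots> = -1/(qq+1)" using h \<open>qq+1\<noteq>0\<close> by (simp add: field_simps)
  finally show "beta 1 = - 1 / (qq + 1)" .
qed

lemma beta1_nz: "beta 1 \<noteq> 0" using beta1 by simp


lemma mf_bound:
  assumes "degree p < N"
  shows "moment_functional m p = (\<Sum>i<N. coeff p i * m i)"
  unfolding moment_functional_def
  by (rule sum.mono_neutral_left) (use assms in \<open>auto simp: coeff_eq_0\<close>)

lemma mf_add:
  fixes m :: "nat \<Rightarrow> 'a::field" and p s :: "'a poly"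
  shows "moment_functional m (p + s) = moment_functional m p + moment_functional m s"
proof -
  define N where "N = Suc (max (degree p) (degree s))"
  have "degree (p + s) < N" using degree_add_le_max[of p s] unfolding N_def
    by linarith
  moreover have "degree p < N" "degree s < N" unfolding N_def by auto
  ultimately show ?thesis by (simp add: mf_bound sum.distrib algebra_simps)
qed

lemma mf_smult: "moment_functional m (smult c p) = c * moment_functional m p"
  by (cases "c = 0") (simp_all add: moment_functional_def sum_distrib_left mult_ac)

lemma mf_0[simp]: "moment_functional m 0 = 0"
  by (simp add: moment_functional_def)

lemma mf_minus: "moment_functional m (- p) = - moment_functional m p"
  using mf_smult[of m "-1" p] by simp

lemma mf_diff: "moment_functional m (p - r) = moment_functional m p - moment_functional m r"
  using mf_add[of m p "-r"] mf_minus[of m r] by simp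

lemma mf_sum: "moment_functional m (\<Sum>i\<in>A. f i) = (\<Sum>i\<in>A. moment_functional m (f i))"
  by (induction A rule: infinite_finite_induct) (auto simp: mf_add)

lemma mf_monom: "moment_functional m (monom c n) = c * m n"
  by (subst mf_bound[where N="Suc n"]) (use degree_monom_le[of c n] in \<open>auto\<close>)

lemma mf_shift: "moment_functional (\<lambda>n. m (Suc n)) p = moment_functional m (pCons 0 p)"
proof -
  have "degree (pCons 0 p) < Suc (Suc (degree p))" by (cases "p = 0") auto
  hence "moment_functional m (pCons 0 p) = (\<Sum>i<Suc (Suc (degree p)). coeff (pCons 0 p) i * m i)"
    by (rule mf_bound)
  also have "\<dots> = (\<Sum>i<Suc (degree p). coeff p i * m (Suc i))"
    by (subst sum.lessThan_Suc_shift) simp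
  also have "\<dots> = moment_functional (\<lambda>n. m (Suc n)) p" by (rule mf_bound[symmetric]) simp
  finally show ?thesis ..
qed

lemma pderiv_sum': "pderiv (\<Sum>i\<in>A. f i) = (\<Sum>i\<in>A. pderiv (f i))"
  by (induction A rule: infinite_finite_induct) (auto simp: pderiv_add)

lemma pcompose_monom: "pcompose (monom c n) r = smult c (r ^ n)"
  by (simp add: pcompose_altdef map_poly_monom poly_monom smult_conv_map_poly)

abbreviation B where "B \<equiv> moment_functional beta"

lemma binom_lin: "[:1, a:] ^ n = (\<Sum>k\<le>n. monom (of_nat (n choose k) * a ^ k) k)"
proof -
  have "[:1, a:] = monom a 1 + 1" by (simp add: monom_altdef one_pCons)
  hence "[:1, a:] ^ n = (\<Sum>k\<le>n. of_nat (n choose k) * monom a 1 ^ k * 1 ^ (n - k))"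
    by (simp add: binomial_ring)
  also have "\<dots> = (\<Sum>k\<le>n. monom (of_nat (n choose k) * a ^ k) k)"
    by (intro sum.cong refl) (simp add: monom_power of_nat_poly smult_monom[symmetric] flip: smult_conv_map_poly)
  finally show ?thesis .
qed

lemma FE_monom: "qq * B (pcompose (monom c n) [:1,qq:]) - B (monom c n)
   = poly (pderiv (monom c n)) 0 + (qq - 1) * poly (monom c n) 0"
proof -
  have "B (pcompose (monom c n) [:1,qq:]) = c * (\<Sum>k\<le>n. of_nat (n choose k) * qq ^ k * beta k)"
    by (simp add: pcompose_monom binom_lin mf_smult mf_sum mf_monom)
  hence "qq * B (pcompose (monom c n) [:1,qq:]) - B (monom c n) = c * (qq * (\<Sum>k\<le>n. of_nat (n choose k) * qq ^ k * beta k) - beta n)"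
    by (simp add: mf_monom algebra_simps)
  also have "\<dots> = c * beta_rhs n" using beta_rel[of n] by simp
  also have "\<dots> = poly (pderiv (monom c n)) 0 + (qq - 1) * poly (monom c n) 0"
    by (auto simp: beta_rhs_def pderiv_monom poly_monom power_0_left)
  finally show ?thesis .
qed

lemma FE: "qq * B (pcompose f [:1,qq:]) - B f = poly (pderiv f) 0 + (qq - 1) * poly f 0"
proof -
  define d where "d = degree f"
  have f: "f = (\<Sum>i\<le>d. monom (coeff f i) i)" unfolding d_def by (simp add: poly_as_sum_of_monoms)
  have "qq * B (pcompose f [:1,qq:]) - B f
     = (\<Sum>i\<le>d. qq * B (pcompose (monom (coeff f i) i) [:1,qq:]) - B (monom (coeff f i) i))"
    by (subst (1 2) f) (simp add: pcompose_sum mf_sum sum_distrib_left sum_subtractf)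
  also have "\<dots> = (\<Sum>i\<le>d. poly (pderiv (monom (coeff f i) i)) 0 + (qq - 1) * poly (monom (coeff f i) i) 0)"
    by (simp add: FE_monom)
  also have "\<dots> = poly (pderiv f) 0 + (qq - 1) * poly f 0"
    by (subst (3 4) f) (simp add: pderiv_sum' poly_sum sum.distrib sum_distrib_left)
  finally show ?thesis .
qed


section \<open>Change of variable y = 1 + (q-1) x\<close>

definition Y :: "Qq poly" where "Y = [:1, qq - 1:]"
definition Bh :: "Qq poly \<Rightarrow> Qq" where "Bh g = B (pcompose g Y)"

lemma Bh_add: "Bh (p + s) = Bh p + Bh s" by (simp add: Bh_def pcompose_add mf_add)
lemma Bh_diff: "Bh (p - s) = Bh p - Bh s" by (simp add: Bh_def pcompose_diff mf_diff)
lemma Bh_smult: "Bh (smult c p) = c * Bh p" by (simp add: Bh_def pcompose_smult mf_smult)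
lemma Bh_sum: "Bh (\<Sum>i\<in>A. f i) = (\<Sum>i\<in>A. Bh (f i))" by (simp add: Bh_def pcompose_sum mf_sum)
lemma Bh_0[simp]: "Bh 0 = 0" by (simp add: Bh_def)

lemma FE_y: "Bh g - qq * Bh (pcompose g [:0,qq:]) = (1 - qq) * (poly g 1 + poly (pderiv g) 1)"
proof -
  have e1: "pcompose Y [:1,qq:] = pcompose [:0,qq:] Y"
    by (simp add: Y_def pcompose_pCons algebra_simps)
  have "pcompose (pcompose g Y) [:1,qq:] = pcompose (pcompose g [:0,qq:]) Y"
    by (metis pcompose_assoc e1)
  moreover have "poly (pcompose g Y) 0 = poly g 1" by (simp add: poly_pcompose Y_def)
  moreover have "poly (pderiv (pcompose g Y)) 0 = (qq - 1) * poly (pderiv g) 1"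
    by (simp add: pderiv_pcompose poly_pcompose Y_def pderiv_pCons)
  ultimately have "qq * Bh (pcompose g [:0,qq:]) - Bh g = (qq - 1) * poly (pderiv g) 1 + (qq - 1) * poly g 1"
    using FE[of "pcompose g Y"] by (simp add: Bh_def)
  thus ?thesis by (simp add: algebra_simps)
qed

section \<open>q-derivative\<close>

definition Dq :: "Qq poly \<Rightarrow> Qq poly" where
  "Dq p = smult (inverse (1 - qq)) ((p - pcompose p [:0,qq:]) div [:0,1:])"

lemma x_dvd: "poly p 0 = 0 \<Longrightarrow> [:0,1:] * (p div [:0,1:]) = p"
  using poly_eq_0_iff_dvd[of p 0] by (metis dvd_mult_div_cancel minus_zero)

lemma Dq_char: "[:0,1:] * smult (1 - qq) (Dq p) = p - pcompose p [:0,qq:]"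
proof -
  have "poly (p - pcompose p [:0,qq:]) 0 = 0" by (simp add: poly_pcompose)
  from x_dvd[OF this] show ?thesis by (simp add: Dq_def)
qed

lemma Dq_unique: "[:0,1:] * smult (1 - qq) r = p - pcompose p [:0,qq:] \<Longrightarrow> Dq p = r"
  using Dq_char[of p] by (metis mult_left_cancel pCons_eq_0_iff one_neq_zero smult_cancel one_minus_qq_nz(1))

lemma smult_as_mult: "smult c p = [:c:] * p" by simp

lemma Dq_mult: "Dq (F * G) = Dq F * G + pcompose F [:0,qq:] * Dq G"
proof (rule Dq_unique)
  have "[:0,1:] * smult (1 - qq) (Dq F * G + pcompose F [:0,qq:] * Dq G)
      = ([:0,1:] * smult (1 - qq) (Dq F)) * G + pcompose F [:0,qq:] * ([:0,1:] * smult (1 - qq) (Dq G))"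
    by (simp only: smult_as_mult) (simp add: algebra_simps)
  also have "\<dots> = F * G - pcompose (F * G) [:0,qq:]"
    by (simp only: Dq_char pcompose_mult) (simp add: algebra_simps)
  finally show "[:0,1:] * smult (1 - qq) (Dq F * G + pcompose F [:0,qq:] * Dq G) = F * G - pcompose (F * G) [:0,qq:]" .
qed

lemma Bh_Dq: "Bh (Dq J) = poly (pderiv J) 1"
proof -
  define c where "c = poly J 0"
  define G where "G = (J - [:c:]) div [:0,1:]"
  have xG: "[:0,1:] * G = J - [:c:]" unfolding G_def by (rule x_dvd) (simp add: c_def)
  have xG0: "pCons 0 G = J - [:c:]" using xG by simp
  have "[:0,1:] * (G - smult qq (pcompose G [:0,qq:])) = [:0,1:] * smult (1 - qq) (Dq J)"
  proof -
    have "pcompose ([:0,1:] * G) [:0,qq:] = [:0,qq:] * pcompose G [:0,qq:]"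
      by (simp add: pcompose_pCons)
    hence h1: "[:0,qq:] * pcompose G [:0,qq:] = pcompose J [:0,qq:] - [:c:]"
      by (simp add: xG0 pcompose_diff)
    have h2: "[:0,1:] * smult qq (pcompose G [:0,qq:]) = [:0,qq:] * pcompose G [:0,qq:]"
      by simp
    have "[:0,1:] * (G - smult qq (pcompose G [:0,qq:])) = [:0,1:] * G - [:0,1:] * smult qq (pcompose G [:0,qq:])"
      by (rule right_diff_distrib)
    also have "\<dots> = (J - [:c:]) - (pcompose J [:0,qq:] - [:c:])" using xG h1 h2 by simp
    also have "\<dots> = J - pcompose J [:0,qq:]" by simp
    also have "\<dots> = [:0,1:] * smult (1 - qq) (Dq J)" by (rule Dq_char[symmetric])
    finally show ?thesis .
  qed
  hence G1: "G - smult qq (pcompose G [:0,qq:]) = smult (1 - qq) (Dq J)"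
    by (metis mult_left_cancel pCons_eq_0_iff one_neq_zero)
  have "pderiv (pCons 0 G) = pderiv J" by (simp add: xG0 pderiv_diff pderiv_pCons)
  hence "pderiv J = G + pCons 0 (pderiv G)" by (simp add: pderiv_pCons)
  hence "poly (pderiv J) 1 = poly G 1 + poly (pderiv G) 1" by simp
  moreover have "(1 - qq) * Bh (Dq J) = (1 - qq) * (poly G 1 + poly (pderiv G) 1)"
    using FE_y[of G] G1 by (metis Bh_diff Bh_smult)
  ultimately show ?thesis by simp
qed



section \<open>q-Pochhammer polynomials\<close>

definition yp :: "Qq \<Rightarrow> nat \<Rightarrow> Qq poly" where
  "yp a k = (\<Prod>i<k. [:1, - (qq ^ i * a):])"

lemma yp_0[simp]: "yp a 0 = 1" by (simp add: yp_def)

lemma yp_Suc: "yp a (Suc k) = yp a k * [:1, - (qq ^ k * a):]"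
  by (simp add: yp_def)

lemma yp_Suc': "yp a (Suc k) = [:1, - a:] * yp (qq * a) k"
  unfolding yp_def by (subst prod.lessThan_Suc_shift) (simp add: mult_ac)

lemma poly_yp: "poly (yp a k) z = qpoch (a * z) k"
  by (simp add: yp_def qpoch_def poly_prod mult_ac)

lemma pcompose_yp: "pcompose (yp a k) [:0,qq:] = yp (qq * a) k"
  by (simp add: yp_def pcompose_prod pcompose_pCons algebra_simps)

lemma degree_yp_le: "degree (yp a k) \<le> k"
proof (induction k)
  case (Suc k)
  have "degree (yp a (Suc k)) \<le> degree (yp a k) + degree [:1, - (qq ^ k * a):]"
    unfolding yp_Suc by (rule degree_mult_le)
  moreover have "degree [:1, - (qq ^ k * a):] \<le> 1" by simp
  ultimately show ?case using Suc by linarith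
qed simp

lemma lead_yp: "a \<noteq> 0 \<Longrightarrow> lead_coeff (yp a k) \<noteq> 0"
  by (simp add: yp_def lead_coeff_prod)

lemma yp_nz: "a \<noteq> 0 \<Longrightarrow> yp a k \<noteq> 0"
  using lead_yp by fastforce

lemma degree_yp: "a \<noteq> 0 \<Longrightarrow> degree (yp a k) = k"
proof (induction k)
  case (Suc k)
  have "degree (yp a (Suc k)) = degree (yp a k) + degree [:1, - (qq ^ k * a):]"
    unfolding yp_Suc by (rule degree_mult_eq) (use yp_nz Suc in auto)
  thus ?case using Suc by simp
qed simp

lemma Dq_yp: "Dq (yp a (Suc k)) = smult (- a * (1 - qq ^ Suc k) / (1 - qq)) (yp (qq * a) k)"
proof (rule Dq_unique)
  define Y' where "Y' = yp (qq*a) k"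
  have e1: "pcompose (yp a (Suc k)) [:0,qq:] = Y' * [:1, -(qq^k*(qq*a)):]"
    unfolding Y'_def pcompose_yp by (rule yp_Suc)
  have e3: "yp a (Suc k) = [:1,-a:] * Y'" unfolding Y'_def by (rule yp_Suc')
  have "yp a (Suc k) - pcompose (yp a (Suc k)) [:0,qq:] = Y' * ([:1, - a:] - [:1, -(qq^k*(qq*a)):])"
    by (subst e1, subst e3) (simp add: algebra_simps flip: smult_add_left)
  also have "\<dots> = pCons 0 (smult (- a * (1 - qq ^ Suc k)) Y')"
    by (simp add: algebra_simps)
  also have "\<dots> = [:0,1:] * smult (1 - qq) (smult (- a * (1 - qq ^ Suc k) / (1 - qq)) Y')"
    by simp
  finally show "[:0,1:] * smult (1 - qq) (smult (- a * (1 - qq ^ Suc k) / (1 - qq)) (yp (qq * a) k)) =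
      yp a (Suc k) - pcompose (yp a (Suc k)) [:0,qq:]" unfolding Y'_def by simp
qed

lemma qpoch_add: "qpoch a (m + n) = qpoch a m * qpoch (qq ^ m * a) n"
  by (induction n) (auto simp: qpoch_def algebra_simps power_add)

lemma qpoch_Suc: "qpoch a (Suc k) = qpoch a k * (1 - qq ^ k * a)"
  by (simp add: qpoch_def)

lemma qpoch_Suc': "qpoch a (Suc k) = (1 - a) * qpoch (qq * a) k"
  unfolding qpoch_def by (subst prod.lessThan_Suc_shift) (simp add: mult_ac)

lemma qpoch_nz: "(\<And>i. i < k \<Longrightarrow> qq ^ i * a \<noteq> 1) \<Longrightarrow> qpoch a k \<noteq> 0"
  by (auto simp: qpoch_def)

lemma qpoch_pow_nz: "m > 0 \<Longrightarrow> qpoch (qq ^ m) k \<noteq> 0"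
  by (rule qpoch_nz) (use qq_pow_ne1 in \<open>auto simp flip: power_add\<close>)


definition Mh :: "Qq poly \<Rightarrow> Qq" where "Mh h = Bh ([:1,-1:] * h)"
definition NN :: "nat \<Rightarrow> Qq poly \<Rightarrow> Qq" where "NN k g = Mh (yp qq k * g)"

lemma NN_alt: "NN k g = Bh (yp 1 (Suc k) * g)"
proof -
  have "yp 1 (Suc k) = [:1,-1:] * yp qq k" using yp_Suc'[of 1 k] by simp
  thus ?thesis by (simp only: NN_def Mh_def mult.assoc)
qed

definition ck :: "nat \<Rightarrow> Qq" where "ck k = - (inverse qq * (1 - qq ^ Suc (Suc k)) / (1 - qq))"

lemma NN_rec: "ck k * NN k g + NN (Suc k) (Dq g) = (inverse qq - 1) * qpoch qq k * poly g 1"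
proof -
  define F where "F = yp (inverse qq) (Suc (Suc k))"
  have DF: "Dq F = smult (ck k) (yp 1 (Suc k))"
    unfolding F_def Dq_yp ck_def by simp
  have cF: "pcompose F [:0,qq:] = yp 1 (Suc (Suc k))"
    unfolding F_def pcompose_yp by simp
  have "Bh (Dq (F * g)) = ck k * NN k g + NN (Suc k) (Dq g)"
    unfolding Dq_mult DF cF NN_alt by (simp add: Bh_add Bh_smult)
  moreover have "poly F 1 = 0"
    unfolding F_def poly_yp qpoch_def by (rule prod_zero) (auto intro!: bexI[where x=1])
  moreover have "F = [:1, - inverse qq:] * ([:1,-1:] * yp qq k)"
    unfolding F_def yp_Suc' by simp
  hence "poly (pderiv F) 1 = (inverse qq - 1) * qpoch qq k"
    by (simp only: pderiv_mult poly_add poly_mult) (simp add: pderiv_pCons poly_yp algebra_simps)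
  ultimately show ?thesis by (simp add: Bh_Dq pderiv_mult algebra_simps)
qed

definition gy :: "nat \<Rightarrow> Qq poly" where "gy j = yp (qq / qq ^ j) j"

lemma gy_0[simp]: "gy 0 = 1" by (simp add: gy_def)

lemma Dq_gy: "Dq (gy (Suc j)) = smult (- (qq / qq ^ Suc j) * (1 - qq ^ Suc j) / (1 - qq)) (gy j)"
  unfolding gy_def Dq_yp by (simp add: field_simps)

lemma poly_gy1: "poly (gy (Suc j)) 1 = 0"
  unfolding gy_def poly_yp qpoch_def by (rule prod_zero) (auto intro!: bexI[where x=j] simp: field_simps)

lemma degree_gy: "degree (gy j) = j" unfolding gy_def by (rule degree_yp) simp

lemma lead_gy: "lead_coeff (gy j) \<noteq> 0" unfolding gy_def by (rule lead_yp) simp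

fun EE :: "nat \<Rightarrow> Qq" where
  "EE 0 = - ((1 - qq) * (1 - qq))"
| "EE (Suc j) = - (qq * qq / qq ^ Suc j) * (1 - qq ^ Suc j) * EE j"

lemma qq_Suc_ne1[simp]: "qq * qq ^ j \<noteq> 1" using qq_pow_ne1[of "Suc j"] by simp

lemma Dq_1[simp]: "Dq 1 = 0" by (rule Dq_unique) (simp add: pcompose_1)

lemma EE_nz: "EE j \<noteq> 0"
  by (induction j) (auto simp: one_minus_qq_pow_nz)

lemma ck_nz: "ck k \<noteq> 0" unfolding ck_def using one_minus_qq_pow_nz[of "Suc (Suc k)"] by simp

lemma field_aux:
  fixes A u E P Q w :: Qq
  assumes "w \<noteq> 0" "Q \<noteq> 0"
  shows "- (- A * u / (1 - qq)) * (E * P / Q) / (- (inverse qq * w / (1 - qq)))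
     = - (qq * A) * u * E * P / (w * Q)"
  using assms by (simp add: field_simps)

lemma solve_aux:
  fixes c X d Z :: Qq
  assumes "c \<noteq> 0" "c * X + d * Z = 0"
  shows "X = - d * Z / c"
  using assms by (simp add: field_simps)

lemma NN_smult: "NN k (smult c g) = c * NN k g"
  by (simp add: NN_def Mh_def mult_smult_right Bh_smult)

lemma NN_gy: "NN k (gy j) = EE j * qpoch qq (k + j) / qpoch (qq ^ (k+2)) (Suc j)"
proof (induction j arbitrary: k)
  case 0
  have "ck k * NN k 1 + NN (Suc k) 0 = (inverse qq - 1) * qpoch qq k"
    using NN_rec[of k 1] by simp
  moreover have "NN (Suc k) 0 = 0" by (simp add: NN_def Mh_def)
  ultimately have "NN k 1 = (inverse qq - 1) * qpoch qq k / ck k" using ck_nz by (simp add: field_simps)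
  hence "NN k 1 = ((inverse qq - 1) / ck k) * qpoch qq k" by simp
  also have "(inverse qq - 1) / ck k = - ((1-qq)*(1-qq)) / (1 - qq^(Suc (Suc k)))"
    using one_minus_qq_pow_nz[of "Suc (Suc k)"] by (simp add: ck_def field_simps)
  also have "- ((1-qq)*(1-qq)) / (1 - qq^(Suc (Suc k))) * qpoch qq k = EE 0 * qpoch qq (k+0) / qpoch (qq^(k+2)) (Suc 0)"
    by (simp add: qpoch_Suc qpoch_def)
  finally show ?case by simp
next
  case (Suc j)
  have "ck k * NN k (gy (Suc j)) + NN (Suc k) (Dq (gy (Suc j))) = 0"
    using NN_rec[of k "gy (Suc j)"] by (simp add: poly_gy1)
  hence "ck k * NN k (gy (Suc j)) + (- (qq / qq ^ Suc j) * (1 - qq ^ Suc j) / (1 - qq)) * NN (Suc k) (gy j) = 0"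
    by (simp only: Dq_gy NN_smult)
  hence "NN k (gy (Suc j)) = - (- (qq / qq ^ Suc j) * (1 - qq ^ Suc j) / (1 - qq)) * NN (Suc k) (gy j) / ck k"
    by (rule solve_aux[OF ck_nz])
  also have "\<dots> = - (- (qq / qq ^ Suc j) * (1 - qq ^ Suc j) / (1 - qq)) * (EE j * qpoch qq (Suc k + j) / qpoch (qq ^ (Suc k + 2)) (Suc j)) / ck k"
    by (simp only: Suc.IH)
  also have "\<dots> = EE (Suc j) * qpoch qq (k + Suc j) / qpoch (qq ^ (k + 2)) (Suc (Suc j))"
  proof -
    have q2: "qpoch (qq ^ (k + 2)) (Suc (Suc j)) = (1 - qq ^ (k+2)) * qpoch (qq ^ (Suc k + 2)) (Suc j)"
      by (subst qpoch_Suc') simp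
    have nz1: "qpoch (qq ^ (Suc k + 2)) (Suc j) \<noteq> 0" by (rule qpoch_pow_nz) simp
    have nz2: "1 - qq ^ (k+2) \<noteq> 0" by (rule one_minus_qq_pow_nz) simp
    have ck: "ck k = - (inverse qq * (1 - qq ^ (k+2)) / (1 - qq))" by (simp add: ck_def)
    have ee: "EE (Suc j) = - (qq * (qq / qq ^ Suc j)) * (1 - qq ^ Suc j) * EE j" by simp
    have k1: "Suc k + j = k + Suc j" "Suc k + 2 = Suc (k+2)" by simp_all
    show ?thesis unfolding q2 ck ee k1
      by (rule field_aux) (use nz1 nz2 in auto)
  qed
  finally show ?case .
qed


section \<open>Terminating q-binomial sums\<close>

definition hh :: "nat \<Rightarrow> nat \<Rightarrow> Qq" where
  "hh n k = qpoch (inverse qq ^ n) k / qpoch qq k"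

lemma qpoch_qq_nz: "qpoch qq k \<noteq> 0"
  using qpoch_pow_nz[of 1 k] by simp

lemma hh_0[simp]: "hh n 0 = 1" by (simp add: hh_def qpoch_def)

lemma hh_zero: "n < k \<Longrightarrow> hh n k = 0"
  unfolding hh_def qpoch_def
  by (subst prod_zero) (auto intro!: bexI[where x=n] simp: field_simps)

lemma hh_rec_aux:
  fixes a Q P u :: Qq
  assumes "Q \<noteq> 0" "1 - u * qq \<noteq> 0"
  shows "(1 - a * inverse qq) * P / (Q * (1 - u * qq))
       = P * (1 - u * a) / (Q * (1 - u * qq)) - a * inverse qq * (P / Q)"
  using assms by (simp add: field_simps)

lemma hh_rec: "hh (Suc n) (Suc i) = hh n (Suc i) - inverse qq ^ Suc n * hh n i"
proof -
  define a where "a = inverse qq ^ n"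
  have f1: "qq * inverse qq ^ Suc n = a" by (simp add: a_def)
  have f2: "inverse qq ^ Suc n = a * inverse qq" by (simp add: a_def mult.commute)
  have e1: "hh (Suc n) (Suc i) = (1 - a * inverse qq) * qpoch a i / (qpoch qq i * (1 - qq ^ i * qq))"
    unfolding hh_def qpoch_Suc'[of "inverse qq ^ Suc n"] f1 qpoch_Suc[of qq] by (simp only: f2)
  have e2: "hh n (Suc i) = qpoch a i * (1 - qq ^ i * a) / (qpoch qq i * (1 - qq ^ i * qq))"
    unfolding hh_def qpoch_Suc a_def ..
  have e3: "hh n i = qpoch a i / qpoch qq i" unfolding hh_def a_def ..
  have nz: "1 - qq ^ i * qq \<noteq> 0" using qq_pow_ne1[of "Suc i"] by (simp add: mult.commute)
  show ?thesis unfolding e1 e2 e3 f2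
    by (rule hh_rec_aux) (use qpoch_qq_nz nz in auto)
qed


lemma qbin: "(\<Sum>k\<le>n. hh n k * z ^ k) = qpoch (inverse qq ^ n * z) n"
proof (induction n)
  case 0
  then show ?case by (simp add: qpoch_def)
next
  case (Suc n)
  define c where "c = inverse qq ^ Suc n"
  define T where "T = (\<Sum>k\<le>n. hh n k * z ^ k)"
  have "(\<Sum>k\<le>Suc n. hh (Suc n) k * z ^ k) = 1 + (\<Sum>i\<le>n. hh (Suc n) (Suc i) * z ^ Suc i)"
    by (subst sum.atMost_Suc_shift) simp
  also have "\<dots> = (1 + (\<Sum>i\<le>n. hh n (Suc i) * z ^ Suc i)) - c * z * T"
    unfolding hh_rec c_def T_def by (simp add: algebra_simps sum_subtractf sum_distrib_left)
  also have "1 + (\<Sum>i\<le>n. hh n (Suc i) * z ^ Suc i) = (\<Sum>k\<le>Suc n. hh n k * z ^ k)"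
    by (subst sum.atMost_Suc_shift) simp
  also have "\<dots> = T" unfolding T_def by (simp add: hh_zero)
  also have "T - c * z * T = (1 - c * z) * qpoch (inverse qq ^ n * z) n"
    unfolding T_def Suc.IH by (simp add: algebra_simps)
  also have "\<dots> = qpoch (inverse qq ^ Suc n * z) (Suc n)"
    unfolding qpoch_Suc' c_def by (simp add: mult.assoc[symmetric])
  finally show ?case .
qed

lemma qW_aux:
  fixes Q B b X Y P u :: Qq
  assumes "X \<noteq> 0" "Y \<noteq> 0" "P \<noteq> 0" "1 - u * b \<noteq> 0" "X * (1 - u * b) = (1 - b) * Y"
  shows "Q * B / X - inverse P * (Q * (P * B) / Y) = Q * (1 - u) * (B * b) / (X * (1 - u * b))"
proof -
  have "1 - b \<noteq> 0" using assms by auto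
  have Y: "Y = X * (1 - u * b) / (1 - b)" using assms \<open>1 - b \<noteq> 0\<close> by (simp add: field_simps)
  show ?thesis unfolding Y using assms \<open>1 - b \<noteq> 0\<close> by (simp add: field_simps)
qed

lemma qW: "(\<And>k. k \<le> n \<Longrightarrow> b * qq ^ k \<noteq> 1) \<Longrightarrow>
   (\<Sum>k\<le>n. hh n k * qq ^ k / (1 - b * qq ^ k)) = qpoch qq n * b ^ n / qpoch b (Suc n)"
proof (induction n arbitrary: b)
  case 0
  then show ?case by (simp add: qpoch_def)
next
  case (Suc n)
  define c where "c = inverse qq ^ Suc n"
  define W where "W = (\<lambda>b. \<Sum>k\<le>n. hh n k * qq ^ k / (1 - b * qq ^ k))"
  have "(\<Sum>k\<le>Suc n. hh (Suc n) k * qq ^ k / (1 - b * qq ^ k))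
      = 1 / (1 - b) + (\<Sum>i\<le>n. hh (Suc n) (Suc i) * qq ^ Suc i / (1 - b * qq ^ Suc i))"
    by (subst sum.atMost_Suc_shift) simp
  also have "\<dots> = (1 / (1 - b) + (\<Sum>i\<le>n. hh n (Suc i) * qq ^ Suc i / (1 - b * qq ^ Suc i)))
        - c * qq * W (qq * b)"
    unfolding hh_rec c_def W_def by (simp add: algebra_simps sum_subtractf sum_distrib_left diff_divide_distrib)
  also have "1 / (1 - b) + (\<Sum>i\<le>n. hh n (Suc i) * qq ^ Suc i / (1 - b * qq ^ Suc i))
      = (\<Sum>k\<le>Suc n. hh n k * qq ^ k / (1 - b * qq ^ k))"
    by (subst sum.atMost_Suc_shift) simp
  also have "\<dots> = W b" unfolding W_def by (simp add: hh_zero)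
  also have "W b = qpoch qq n * b ^ n / qpoch b (Suc n)"
    unfolding W_def by (rule Suc.IH) (use Suc.prems in auto)
  also have "W (qq * b) = qpoch qq n * (qq * b) ^ n / qpoch (qq * b) (Suc n)"
    unfolding W_def by (rule Suc.IH) (use Suc.prems[of "Suc _"] in \<open>auto simp: mult_ac\<close>)
  also have "qpoch qq n * b ^ n / qpoch b (Suc n) - c * qq * (qpoch qq n * (qq * b) ^ n / qpoch (qq * b) (Suc n))
     = qpoch qq (Suc n) * b ^ Suc n / qpoch b (Suc (Suc n))"
  proof -
    have cq: "c * qq = inverse (qq ^ n)" by (simp add: c_def power_inverse)
    have X: "qpoch b (Suc n) \<noteq> 0"
      by (rule qpoch_nz) (use Suc.prems in \<open>auto simp: mult.commute\<close>)
    have Y: "qpoch (qq * b) (Suc n) \<noteq> 0"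
      by (rule qpoch_nz) (use Suc.prems[of "Suc _"] in \<open>auto simp: mult_ac\<close>)
    have u: "1 - qq ^ Suc n * b \<noteq> 0" using Suc.prems[of "Suc n"] by (auto simp: mult.commute)
    have rel: "qpoch b (Suc n) * (1 - qq ^ Suc n * b) = (1 - b) * qpoch (qq * b) (Suc n)"
      using qpoch_Suc[of b "Suc n"] qpoch_Suc'[of b "Suc n"] by simp
    show ?thesis unfolding cq power_mult_distrib
      using qW_aux[OF X Y _ u rel, of "qq^n" "qpoch qq n" "b^n"]
      by (simp add: qpoch_Suc[of qq n] qpoch_Suc[of b "Suc n"] mult_ac)
  qed
  finally show ?case .
qed



definition coef :: "nat \<Rightarrow> nat \<Rightarrow> Qq" where
  "coef n k = qpoch (inverse qq ^ n) k * qpoch (qq ^ (n + 2)) k * qq ^ k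
        / (qpoch qq k * qpoch qq k * qpoch (qq ^ 2) k)"

definition Ph :: "nat \<Rightarrow> Qq poly" where
  "Ph n = (\<Sum>k\<le>n. smult (coef n k) (yp qq k))"

lemma qpoch_x_eq: "qpoch_x k = pcompose (yp qq k) Y"
  unfolding qpoch_x_def yp_def pcompose_prod
  by (intro prod.cong refl) (simp add: pcompose_pCons Y_def algebra_simps one_pCons)

lemma Pfam_eq: "Pfam n = pcompose (Ph n) Y"
  unfolding Pfam_def Ph_def pcompose_sum pcompose_smult qpoch_x_eq coef_def ..

lemma Mh_add: "Mh (p + s) = Mh p + Mh s" by (simp add: Mh_def distrib_left Bh_add)
lemma Mh_smult: "Mh (smult c p) = c * Mh p" by (simp add: Mh_def Bh_smult)
lemma Mh_sum: "Mh (\<Sum>i\<in>A. f i) = (\<Sum>i\<in>A. Mh (f i))" by (simp add: Mh_def sum_distrib_left Bh_sum)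
lemma Mh_diff: "Mh (p - s) = Mh p - Mh s" by (simp add: Mh_def right_diff_distrib Bh_diff)

lemma Mh_Ph: "Mh (Ph n * g) = (\<Sum>k\<le>n. coef n k * NN k g)"
  unfolding Ph_def sum_distrib_right Mh_sum NN_def
  by (simp add: Mh_smult)

lemma S_eq: "Mh (Ph n * gy j) = EE j * (\<Sum>k\<le>n. coef n k * (qpoch qq (k + j) / qpoch (qq ^ (k+2)) (Suc j)))"
  unfolding Mh_Ph NN_gy sum_distrib_left by (simp add: mult_ac)

lemma sum_poly_zero:
  assumes "degree R < n"
  shows "(\<Sum>k\<le>n. hh n k * qq ^ k * poly R (qq ^ k)) = 0"
proof -
  have "(\<Sum>k\<le>n. hh n k * qq ^ k * poly R (qq ^ k))
      = (\<Sum>k\<le>n. \<Sum>m\<le>degree R. coeff R m * (hh n k * (qq ^ Suc m) ^ k))"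
    unfolding poly_altdef sum_distrib_left
    by (intro sum.cong refl) (simp add: power_mult_distrib power_mult[symmetric] mult_ac power_add[symmetric])
  also have "\<dots> = (\<Sum>m\<le>degree R. coeff R m * (\<Sum>k\<le>n. hh n k * (qq ^ Suc m) ^ k))"
    by (subst sum.swap) (simp add: sum_distrib_left)
  also have "\<dots> = 0"
  proof (intro sum.neutral ballI)
    fix m assume "m \<in> {..degree R}"
    hence m: "m < n" using assms by auto
    have "qpoch (inverse qq ^ n * qq ^ Suc m) n = 0"
      unfolding qpoch_def
    proof (rule prod_zero)
      have "qq ^ (n - Suc m) * qq ^ Suc m = qq ^ n" by (subst power_add[symmetric]) (use m in simp)
      hence "qq ^ (n - Suc m) * (inverse qq ^ n * qq ^ Suc m) = 1"
        by (simp add: field_simps)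
      thus "\<exists>a\<in>{..<n}. 1 - qq ^ a * (inverse qq ^ n * qq ^ Suc m) = 0"
        using m by (intro bexI[where x="n - Suc m"]) auto
    qed simp
    thus "coeff R m * (\<Sum>k\<le>n. hh n k * (qq ^ Suc m) ^ k) = 0" by (simp add: qbin)
  qed
  finally show ?thesis .
qed


lemma coef_alt: "coef n k = hh n k * qpoch (qq ^ (n + 2)) k * qq ^ k / (qpoch qq k * qpoch (qq ^ 2) k)"
  unfolding coef_def hh_def by (simp add: field_simps)

lemma pow2_nz: "qpoch (qq ^ 2) k \<noteq> 0" by (rule qpoch_pow_nz) simp

lemma term_aux:
  fixes h Pk qk Qk Q2k Q2n J D E :: Qq
  assumes "Qk \<noteq> 0" "Q2k \<noteq> 0" "D \<noteq> 0" "Pk * Q2n = Q2k * (D * E)"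
  shows "h * Pk * qk / (Qk * Q2k) * (Qk * J / D) * Q2n = h * qk * (J * E)"
proof -
  have "h * Pk * qk / (Qk * Q2k) * (Qk * J / D) * Q2n = h * qk * J * (Pk * Q2n) / (Q2k * D)"
    using assms by (simp add: field_simps)
  also have "\<dots> = h * qk * (J * E)" unfolding assms(4) using assms by (simp add: field_simps)
  finally show ?thesis .
qed

lemma pw: "a + b = c \<Longrightarrow> qq ^ a * qq ^ b = qq ^ c"
  by (simp add: power_add[symmetric])

lemma PQ: "qpoch (qq ^ (n + 2)) k * qpoch (qq ^ 2) n = qpoch (qq ^ 2) k * qpoch (qq ^ (k + 2)) n"
proof -
  have a: "qpoch (qq ^ 2) (n + k) = qpoch (qq ^ 2) n * qpoch (qq ^ (n + 2)) k"
    unfolding qpoch_add pw[of n 2 "n+2", OF refl] ..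
  have b: "qpoch (qq ^ 2) (k + n) = qpoch (qq ^ 2) k * qpoch (qq ^ (k + 2)) n"
    unfolding qpoch_add pw[of k 2 "k+2", OF refl] ..
  show ?thesis using a b by (simp add: add.commute mult.commute)
qed

lemma term_lt:
  assumes "j < n"
  shows "coef n k * (qpoch qq (k + j) / qpoch (qq ^ (k+2)) (Suc j)) * qpoch (qq ^ 2) n
       = hh n k * qq ^ k * poly (yp qq j * yp (qq ^ (j+3)) (n - Suc j)) (qq ^ k)"
proof -
  define E where "E = qpoch (qq ^ (j + 3 + k)) (n - Suc j)"
  have X: "qpoch (qq ^ (k + 2)) n = qpoch (qq ^ (k+2)) (Suc j) * E"
  proof -
    have "n = Suc j + (n - Suc j)" using assms by simp
    hence "qpoch (qq ^ (k + 2)) n = qpoch (qq ^ (k + 2)) (Suc j + (n - Suc j))" by simp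
    also have "\<dots> = qpoch (qq ^ (k+2)) (Suc j) * E"
    proof -
      have e: "qq ^ Suc j * qq ^ (k+2) = qq ^ (j+3+k)" by (rule pw) simp
      show ?thesis unfolding qpoch_add E_def e ..
    qed
    finally show ?thesis .
  qed
  have J: "qpoch qq (k + j) = qpoch qq k * qpoch (qq ^ (k + 1)) j"
  proof -
    have e: "qq ^ k * qq = qq ^ (k+1)" by (simp add: mult.commute)
    show ?thesis unfolding qpoch_add e ..
  qed
  have P: "poly (yp qq j * yp (qq ^ (j+3)) (n - Suc j)) (qq ^ k) = qpoch (qq ^ (k+1)) j * E"
    unfolding E_def poly_mult poly_yp pw[of "j+3" k "j+3+k", OF refl] pw[of 1 k "k+1", simplified] by simp
  show ?thesis unfolding coef_alt J P
    by (rule term_aux[OF qpoch_qq_nz pow2_nz qpoch_pow_nz]) (use PQ X in auto)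
qed

lemma term_eq:
  shows "coef n k * (qpoch qq (k + n) / qpoch (qq ^ (k+2)) (Suc n)) * qpoch (qq ^ 2) n
       = hh n k * qq ^ k * (poly (yp qq n) (qq ^ k) / (1 - qq ^ (n + 2) * qq ^ k))"
proof -
  have X: "qpoch (qq ^ (k + 2)) (Suc n) = qpoch (qq ^ (k+2)) n * (1 - qq ^ (n + 2) * qq ^ k)"
  proof -
    have e1: "qq ^ n * qq ^ (k+2) = qq ^ (n+2+k)" by (rule pw) simp
    have e2: "qq ^ (n+2) * qq ^ k = qq ^ (n+2+k)" by (rule pw) simp
    show ?thesis unfolding qpoch_Suc e1 e2 ..
  qed
  have w: "1 - qq ^ (n + 2) * qq ^ k \<noteq> 0"
    unfolding pw[of "n+2" k "n+2+k", OF refl] by (rule one_minus_qq_pow_nz) simp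
  have D: "qpoch (qq ^ (k+2)) n * (1 - qq ^ (n + 2) * qq ^ k) \<noteq> 0"
    using w qpoch_pow_nz[of "k+2" n] by simp
  have J: "qpoch qq (k + n) = qpoch qq k * qpoch (qq ^ (k + 1)) n"
  proof -
    have e: "qq ^ k * qq = qq ^ (k+1)" by (simp add: mult.commute)
    show ?thesis unfolding qpoch_add e ..
  qed
  have P: "poly (yp qq n) (qq ^ k) = qpoch (qq ^ (k + 1)) n"
    unfolding poly_yp pw[of 1 k "k+1", simplified] by simp
  have "coef n k * (qpoch qq (k + n) / qpoch (qq ^ (k+2)) (Suc n)) * qpoch (qq ^ 2) n
     = hh n k * qq ^ k * (qpoch (qq ^ (k + 1)) n * (1 / (1 - qq ^ (n + 2) * qq ^ k)))"
    unfolding coef_alt J X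
    by (rule term_aux[OF qpoch_qq_nz pow2_nz D]) (use PQ w in auto)
  thus ?thesis unfolding P by simp
qed


lemma sum_poly_zero':
  assumes "R = 0 \<or> degree R < n"
  shows "(\<Sum>k\<le>n. hh n k * qq ^ k * poly R (qq ^ k)) = 0"
  using assms sum_poly_zero by auto

lemma S_zero:
  assumes "j < n"
  shows "Mh (Ph n * gy j) = 0"
proof -
  define R where "R = yp qq j * yp (qq ^ (j+3)) (n - Suc j)"
  have "degree R \<le> j + (n - Suc j)"
    unfolding R_def using degree_mult_le[of "yp qq j" "yp (qq ^ (j+3)) (n - Suc j)"]
      degree_yp_le[of qq j] degree_yp_le[of "qq ^ (j+3)" "n - Suc j"] by linarith
  hence dR: "degree R < n" using assms by linarith
  have "(\<Sum>k\<le>n. coef n k * (qpoch qq (k + j) / qpoch (qq ^ (k+2)) (Suc j))) * qpoch (qq ^ 2) n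
      = (\<Sum>k\<le>n. hh n k * qq ^ k * poly R (qq ^ k))"
    unfolding sum_distrib_right R_def using term_lt[OF assms] by simp
  also have "\<dots> = 0" by (rule sum_poly_zero[OF dR])
  finally have "(\<Sum>k\<le>n. coef n k * (qpoch qq (k + j) / qpoch (qq ^ (k+2)) (Suc j))) = 0"
    using pow2_nz[of n] by simp
  thus ?thesis unfolding S_eq by simp
qed

lemma S_nz: "Mh (Ph n * gy n) \<noteq> 0"
proof -
  define b where "b = qq ^ (n + 2)"
  define c where "c = inverse b"
  define A where "A = yp qq n"
  define Qd where "Qd = synthetic_div A c"
  have bnz: "b \<noteq> 0" unfolding b_def by simp
  define a0 where "a0 = poly A c"
  have Adec: "poly A z = (z - c) * poly Qd z + a0" for z
  proof -
    have "poly ([:-c,1:] * synthetic_div A c + [:poly A c:]) z = poly A z"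
      by (simp only: synthetic_div_correct')
    thus ?thesis unfolding Qd_def a0_def[symmetric] by (simp add: algebra_simps)
  qed
  have Qd: "Qd = 0 \<or> degree Qd < n"
  proof (cases n)
    case 0
    then show ?thesis unfolding Qd_def A_def by (simp add: synthetic_div_eq_0_iff)
  next
    case (Suc m)
    then show ?thesis unfolding Qd_def A_def degree_synthetic_div degree_yp[OF qq_nz] by simp
  qed
  have bk: "\<And>k. 1 - b * qq ^ k \<noteq> 0"
    unfolding b_def by (subst power_add[symmetric]) (rule one_minus_qq_pow_nz, simp)
  have split: "\<And>k. poly A (qq ^ k) / (1 - b * qq ^ k) = - c * poly Qd (qq ^ k) + a0 * (1 / (1 - b * qq ^ k))"
  proof -
    fix k
    have cb: "c * b = 1" unfolding c_def using bnz by simp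
    have "- c * (1 - b * qq ^ k) = qq ^ k * (c * b) - c" by (simp add: algebra_simps)
    hence "qq ^ k - c = - c * (1 - b * qq ^ k)" unfolding cb by simp
    hence "poly A (qq ^ k) = (- c * poly Qd (qq ^ k)) * (1 - b * qq ^ k) + a0"
      unfolding Adec by simp
    thus "poly A (qq ^ k) / (1 - b * qq ^ k) = - c * poly Qd (qq ^ k) + a0 * (1 / (1 - b * qq ^ k))"
      using bk[of k] by (simp add: field_simps)
  qed
  have "(\<Sum>k\<le>n. coef n k * (qpoch qq (k + n) / qpoch (qq ^ (k+2)) (Suc n))) * qpoch (qq ^ 2) n
      = (\<Sum>k\<le>n. hh n k * qq ^ k * (poly A (qq ^ k) / (1 - b * qq ^ k)))"
    unfolding sum_distrib_right A_def b_def by (intro sum.cong refl) (rule term_eq)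
  also have "\<dots> = - c * (\<Sum>k\<le>n. hh n k * qq ^ k * poly Qd (qq ^ k))
      + a0 * (\<Sum>k\<le>n. hh n k * qq ^ k / (1 - b * qq ^ k))"
  proof -
    have "\<And>k. hh n k * qq ^ k * (- c * poly Qd (qq ^ k) + a0 * (1 / (1 - b * qq ^ k)))
       = - c * (hh n k * qq ^ k * poly Qd (qq ^ k)) + a0 * (hh n k * qq ^ k / (1 - b * qq ^ k))"
      by (simp add: algebra_simps)
    thus ?thesis unfolding split by (simp only: sum.distrib sum_distrib_left[symmetric])
  qed
  also have "(\<Sum>k\<le>n. hh n k * qq ^ k * poly Qd (qq ^ k)) = 0" by (rule sum_poly_zero'[OF Qd])
  also have "(\<Sum>k\<le>n. hh n k * qq ^ k / (1 - b * qq ^ k)) = qpoch qq n * b ^ n / qpoch b (Suc n)"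
    by (rule qW) (use bk in auto)
  finally have eq: "(\<Sum>k\<le>n. coef n k * (qpoch qq (k + n) / qpoch (qq ^ (k+2)) (Suc n))) * qpoch (qq ^ 2) n
      = a0 * (qpoch qq n * b ^ n / qpoch b (Suc n))" by simp
  have Ac: "a0 \<noteq> 0"
    unfolding a0_def A_def poly_yp
  proof (rule qpoch_nz)
    fix i assume i: "i < n"
    have "qq ^ Suc i \<noteq> qq ^ (n + 2)" unfolding qq_pow_inj using i by simp
    have "qq ^ i * (qq * c) = qq ^ Suc i / qq ^ (n+2)" unfolding c_def b_def by (simp add: divide_inverse)
    thus "qq ^ i * (qq * c) \<noteq> 1" using \<open>qq ^ Suc i \<noteq> qq ^ (n + 2)\<close> by simp
  qed
  have "a0 * (qpoch qq n * b ^ n / qpoch b (Suc n)) \<noteq> 0"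
    using Ac qpoch_qq_nz[of n] bnz qpoch_pow_nz[of "n+2" "Suc n"] unfolding b_def by simp
  hence "(\<Sum>k\<le>n. coef n k * (qpoch qq (k + n) / qpoch (qq ^ (k+2)) (Suc n))) \<noteq> 0"
    using eq by auto
  thus ?thesis unfolding S_eq using EE_nz[of n] by simp
qed


section \<open>Orthogonality in y-coordinates\<close>

lemma degree_drop: "coeff p (Suc d) = 0 \<Longrightarrow> degree p \<le> Suc d \<Longrightarrow> degree p \<le> d"
proof (rule degree_le, intro allI impI)
  fix i assume "d < i" "degree p \<le> Suc d" "coeff p (Suc d) = 0"
  thus "coeff p i = 0" by (cases "i = Suc d") (auto intro: coeff_eq_0)
qed

lemma ortho_aux: "degree g \<le> d \<Longrightarrow> d < n \<Longrightarrow> Mh (Ph n * g) = 0"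
proof (induction d arbitrary: g)
  case 0
  hence "degree g = 0" by simp
  hence "g = [:coeff g 0:]" using degree_0_id by metis
  hence g: "g = smult (coeff g 0) (gy 0)" by simp
  have "Mh (Ph n * g) = coeff g 0 * Mh (Ph n * gy 0)"
    by (subst g) (simp add: mult_smult_right Mh_smult)
  also have "\<dots> = 0" using S_zero[of 0 n] 0 by simp
  finally show ?case .
next
  case (Suc d)
  define \<rho> where "\<rho> = coeff g (Suc d) / lead_coeff (gy (Suc d))"
  define g' where "g' = g - smult \<rho> (gy (Suc d))"
  have lc: "lead_coeff (gy (Suc d)) = coeff (gy (Suc d)) (Suc d)" by (simp add: degree_gy)
  have "coeff g' (Suc d) = 0" unfolding g'_def \<rho>_def using lead_gy[of "Suc d"] lc by simp
  moreover have "degree g' \<le> Suc d" unfolding g'_def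
  proof (rule degree_diff_le)
    show "degree g \<le> Suc d" by (rule Suc.prems(1))
    show "degree (smult \<rho> (gy (Suc d))) \<le> Suc d"
      using degree_smult_le[of \<rho> "gy (Suc d)"] degree_gy[of "Suc d"] by simp
  qed
  ultimately have "degree g' \<le> d" by (rule degree_drop)
  hence "Mh (Ph n * g') = 0" using Suc.IH Suc.prems by simp
  moreover have "Mh (Ph n * gy (Suc d)) = 0" using S_zero Suc.prems by simp
  moreover have "g = g' + smult \<rho> (gy (Suc d))" unfolding g'_def by simp
  ultimately show ?case by (simp add: distrib_left Mh_add mult_smult_right Mh_smult)
qed

lemma ortho: "g = 0 \<or> degree g < n \<Longrightarrow> Mh (Ph n * g) = 0"
  using ortho_aux[of g "degree g" n] by (auto simp: Mh_def)

lemma coef_nn: "coef n n \<noteq> 0"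
proof -
  have a: "qpoch (inverse qq ^ n) n \<noteq> 0"
  proof (rule qpoch_nz)
    fix i assume "i < n"
    hence "qq ^ i \<noteq> qq ^ n" unfolding qq_pow_inj by simp
    thus "qq ^ i * inverse qq ^ n \<noteq> 1" by (simp add: power_inverse divide_inverse[symmetric])
  qed
  have b: "qpoch (qq ^ (n + 2)) n \<noteq> 0" by (rule qpoch_pow_nz) simp
  show ?thesis unfolding coef_def using a b qpoch_qq_nz[of n] pow2_nz[of n] by simp
qed

lemma degree_Ph: "degree (Ph n) = n" and lead_Ph: "lead_coeff (Ph n) \<noteq> 0"
proof -
  have le: "degree (Ph n) \<le> n" unfolding Ph_def
  proof (rule degree_sum_le)
    fix k assume "k \<in> {..n}"
    thus "degree (smult (coef n k) (yp qq k)) \<le> n"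
      using degree_smult_le[of "coef n k" "yp qq k"] degree_yp_le[of qq k] by simp
  qed simp
  have "coeff (Ph n) n = (\<Sum>k\<le>n. coef n k * coeff (yp qq k) n)" unfolding Ph_def coeff_sum by simp
  also have "\<dots> = coef n n * coeff (yp qq n) n"
    by (subst sum.remove[of _ n]) (auto intro!: sum.neutral simp: coeff_eq_0 degree_yp)
  finally have c: "coeff (Ph n) n = coef n n * lead_coeff (yp qq n)" by (simp add: degree_yp)
  hence "coeff (Ph n) n \<noteq> 0" using coef_nn lead_yp[OF qq_nz] by simp
  hence "n \<le> degree (Ph n)" by (rule le_degree)
  thus d: "degree (Ph n) = n" using le by simp
  show "lead_coeff (Ph n) \<noteq> 0" using c d coef_nn lead_yp[OF qq_nz] by simp
qed

lemma norm_nz: "Mh (Ph n * Ph n) \<noteq> 0"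
proof -
  define \<rho> where "\<rho> = lead_coeff (Ph n) / lead_coeff (gy n)"
  define r where "r = Ph n - smult \<rho> (gy n)"
  have "coeff r n = 0" unfolding r_def \<rho>_def using lead_gy[of n] by (simp add: degree_gy degree_Ph)
  moreover have "degree r \<le> n" unfolding r_def
  proof (rule degree_diff_le)
    show "degree (Ph n) \<le> n" by (simp add: degree_Ph)
    show "degree (smult \<rho> (gy n)) \<le> n"
      using degree_smult_le[of \<rho> "gy n"] degree_gy[of n] by simp
  qed
  ultimately have "r = 0 \<or> degree r < n"
    using le_neq_implies_less leading_coeff_0_iff by blast
  hence "Mh (Ph n * r) = 0" by (rule ortho)
  moreover have "Ph n = r + smult \<rho> (gy n)" unfolding r_def by simp
  ultimately have "Mh (Ph n * Ph n) = \<rho> * Mh (Ph n * gy n)"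
    by (simp add: distrib_left Mh_add mult_smult_right Mh_smult)
  moreover have "\<rho> \<noteq> 0" unfolding \<rho>_def using lead_Ph lead_gy by simp
  ultimately show ?thesis using S_nz by simp
qed


lemma mf_scale: "moment_functional (\<lambda>n. m n / c) p = moment_functional m p / c"
  by (simp add: moment_functional_def sum_divide_distrib)

lemma L_eq: "moment_functional (\<lambda>n. beta (n + 1) / beta 1) (pcompose h Y) = Mh h / ((1 - qq) * beta 1)"
proof -
  have "moment_functional (\<lambda>n. beta (n + 1) / beta 1) (pcompose h Y)
      = moment_functional (\<lambda>n. beta (Suc n)) (pcompose h Y) / beta 1"
    using mf_scale[of "\<lambda>n. beta (Suc n)" "beta 1" "pcompose h Y"] by simp
  also have "\<dots> = B (pCons 0 (pcompose h Y)) / beta 1" by (simp add: mf_shift)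
  also have "Mh h = (1 - qq) * B (pCons 0 (pcompose h Y))"
  proof -
    have e: "pcompose [:1,-1:] Y = [:0, 1 - qq:]" by (simp add: Y_def pcompose_pCons)
    have "pcompose ([:1,-1:] * h) Y = [:0, 1 - qq:] * pcompose h Y"
      by (simp only: pcompose_mult e)
    hence "pcompose ([:1,-1:] * h) Y = smult (1 - qq) (pCons 0 (pcompose h Y))"
      by simp
    thus ?thesis unfolding Mh_def Bh_def by (simp only: mf_smult)
  qed
  hence "B (pCons 0 (pcompose h Y)) = Mh h / (1 - qq)" by (simp add: field_simps)
  finally show ?thesis by (simp add: field_simps)
qed

theorem mainTheorem2:
  shows "is_moment_sequence (\<lambda>n. beta (n + 1) / beta 1) Pfam"
  unfolding is_moment_sequence_def
proof (intro conjI allI impI)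
  show "beta (0 + 1) / beta 1 = 1" using beta1_nz by simp
next
  fix n show "degree (Pfam n) = n"
    unfolding Pfam_eq degree_pcompose degree_Ph by (simp add: Y_def)
next
  fix i j :: nat assume ij: "i \<noteq> j"
  have "Mh (Ph i * Ph j) = 0"
  proof (cases "i < j")
    case True
    then show ?thesis using ortho[of "Ph i" j] by (simp add: degree_Ph mult.commute)
  next
    case False
    then show ?thesis using ortho[of "Ph j" i] ij by (simp add: degree_Ph)
  qed
  thus "moment_functional (\<lambda>n. beta (n + 1) / beta 1) (Pfam i * Pfam j) = 0"
    unfolding Pfam_eq pcompose_mult[symmetric] L_eq by simp
next
  fix n
  show "moment_functional (\<lambda>n. beta (n + 1) / beta 1) (Pfam n * Pfam n) \<noteq> 0"
    unfolding Pfam_eq pcompose_mult[symmetric] L_eq using norm_nz beta1_nz by simp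
qed


end
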